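(* For every $x\in\mathbb R\setminus\{0\}$, $$\exp\Big(\frac{x^2}2-\frac{x^4}{12}\Big)<\cosh(x)<\Big(1+\frac{x^2}3\Big)\exp\Big(\frac{x^2}6\Big).$$ *)

theory Defs
  imports Complex_Main
begin

end

theory Submission
  imports Defs
begin

lemma chi: fixes x :: real assumes "x > 0" shows "sinh x < x * cosh x"
proof -
  let ?f = "\<lambda>t::real. t * cosh t - sinh t"
  have "\<exists>z. 0 < z \<and> z < x \<and> ?f x - ?f 0 = (x - 0) * (z * sinh z)"
    by (rule MVT2[OF assms]) (auto intro!: derivative_eq_intros)
  then obtain z where z: "0 < z" "z < x" "?f x - ?f 0 = x * (z * sinh z)" by auto
  have "x * (z * sinh z) > 0" using z assms by simp
  moreover have "x*cosh x - sinh x = x*(z*sinh z)" using z(3) by simp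
  ultimately show ?thesis by linarith
qed

lemma psi: fixes x :: real assumes "x > 0" shows "(x - x^3/3) * cosh x < sinh x"
proof -
  let ?f = "\<lambda>t::real. sinh t - (t - t^3/3) * cosh t"
  let ?f' = "\<lambda>t::real. t * (t * cosh t - sinh t) + t^3/3 * sinh t"
  have "\<exists>z. 0 < z \<and> z < x \<and> ?f x - ?f 0 = (x - 0) * ?f' z"
    by (rule MVT2[OF assms]) (auto intro!: derivative_eq_intros simp: algebra_simps power2_eq_square power3_eq_cube)
  then obtain z where z: "0 < z" "z < x" "?f x - ?f 0 = x * ?f' z" by auto
  have "?f' z > 0" using z chi[of z] by (intro add_pos_pos mult_pos_pos) auto
  hence "x * ?f' z > 0" using assms by simp
  with z show ?thesis by simp
qed

lemma phi: fixes x :: real assumes "x > 0" shows "3*(3+x^2) * sinh x < x*(9+x^2) * cosh x"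
proof -
  let ?f = "\<lambda>t::real. x*(9+x^2) * cosh x - 3*(3+x^2) * sinh x" 
  let ?g = "\<lambda>t::real. t*(9+t^2) * cosh t - 3*(3+t^2) * sinh t"
  let ?g' = "\<lambda>t::real. t*(3+t^2) * sinh t"
  have "\<exists>z. 0 < z \<and> z < x \<and> ?g x - ?g 0 = (x - 0) * ?g' z"
    by (rule MVT2[OF assms]) (auto intro!: derivative_eq_intros simp: algebra_simps power2_eq_square power3_eq_cube)
  then obtain z where z: "0 < z" "z < x" "?g x - ?g 0 = x * ?g' z" by auto
  have "?g' z > 0" using z by (intro mult_pos_pos) (auto intro: add_pos_nonneg)
  hence "x * ?g' z > 0" using assms by simp
  with z show ?thesis by simp
qed

lemma lower: fixes x :: real assumes "x > 0" shows "x^2/2 - x^4/12 < ln (cosh x)"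
proof -
  let ?g = "\<lambda>t::real. ln (cosh t) - (t^2/2 - t^4/12)"
  let ?g' = "\<lambda>t::real. sinh t / cosh t - (t - t^3/3)"
  have "\<exists>z. 0 < z \<and> z < x \<and> ?g x - ?g 0 = (x - 0) * ?g' z"
    by (rule MVT2[OF assms]) (auto intro!: derivative_eq_intros simp: algebra_simps power2_eq_square power3_eq_cube)
  then obtain z where z: "0 < z" "z < x" "?g x - ?g 0 = x * ?g' z" by auto
  have "?g' z > 0" using psi[of z] z by (simp add: field_simps)
  hence "x * ?g' z > 0" using assms by simp
  with z show ?thesis by simp
qed

lemma upper: fixes x :: real assumes "x > 0" shows "ln (cosh x) < ln (1 + x^2/3) + x^2/6"
proof -
  let ?g = "\<lambda>t::real. ln (1 + t^2/3) + t^2/6 - ln (cosh t)"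
  let ?g' = "\<lambda>t::real. t*(9+t^2) / (3*(3+t^2)) - sinh t / cosh t"
  have "\<exists>z. 0 < z \<and> z < x \<and> ?g x - ?g 0 = (x - 0) * ?g' z"
  proof (rule MVT2[OF assms])
    fix t :: real
    have p: "1 + t^2/3 > 0" by (simp add: add_pos_nonneg)
    have "(?g has_real_derivative ((2*t/3) / (1 + t^2/3) + 2*t/6 - sinh t / cosh t)) (at t)"
      using p by (auto intro!: derivative_eq_intros simp: power2_eq_square)
    moreover have "(2*t/3) / (1 + t^2/3) + 2*t/6 - sinh t / cosh t = ?g' t"
      using p by (simp add: field_simps power2_eq_square power3_eq_cube)
    ultimately show "(?g has_real_derivative ?g' t) (at t)" by simp
  qed
  then obtain z where z: "0 < z" "z < x" "?g x - ?g 0 = x * ?g' z" by auto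
  have "?g' z > 0" using phi[of z] z
    by (simp add: field_simps add_pos_nonneg)
  hence "x * ?g' z > 0" using assms by simp
  with z show ?thesis by simp
qed

theorem lemma2p2:
  fixes x :: real
  assumes "x \<noteq> 0"
  shows "exp (x^2 / 2 - x^4 / 12) < cosh x \<and> cosh x < (1 + x^2 / 3) * exp (x^2 / 6)"
proof -
  define y where "y = \<bar>x\<bar>"
  have y: "y > 0" using assms y_def by simp
  have e2: "x^2 = y^2" and e4: "x^4 = y^4" and ec: "cosh x = cosh y"
    unfolding y_def by (simp_all add: abs_if)
  have p: "1 + y^2/3 > 0" by (simp add: add_pos_nonneg)
  have el: "exp (ln (cosh y)) = cosh y" by simp
  have "exp (y^2/2 - y^4/12) < exp (ln (cosh y))" using lower[OF y] by (simp only: exp_less_cancel_iff)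
  hence A: "exp (y^2/2 - y^4/12) < cosh y" by (simp only: el)
  have "exp (ln (cosh y)) < exp (ln (1 + y^2/3) + y^2/6)" using upper[OF y] by (simp only: exp_less_cancel_iff)
  hence B: "cosh y < (1 + y^2/3) * exp (y^2/6)" using p by (simp add: exp_add)
  show ?thesis using A B by (simp only: e2 e4 ec)
qed

end
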